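(* For any probability distribution $P_{XY}$ on finite $\mathcal X\times\mathcal Y$, $\lim_{\alpha\to1^-}U_\alpha(X;Y)=U(X;Y)$ and $\lim_{\alpha\to1^+}U_\alpha(X;Y)=U(X;Y)$.
   Context: $D(P\|Q)=\sum P\log(P/Q)$ ($0\log(0/q)=0$; $+\infty$ if $P\not\ll Q$). For $\alpha\in(0,1)\cup(1,\infty)$, $D_\alpha(P\|Q)=\frac1{\alpha-1}\log\sum_{x:P(x)>0}P(x)^\alpha Q(x)^{1-\alpha}$ ($+\infty$ if $\alpha>1$ and $P\not\ll Q$). With $P_X$ the $X$-marginal: $U(X;Y)=\min_{Q_Y}D(P_X\times Q_Y\|P_{XY})$ and the Rényi umlaut information is $U_\alpha(X;Y)=\min_{Q_Y}D_\alpha(P_X\times Q_Y\|P_{XY})$. *)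

theory Defs
  imports "HOL-Analysis.Analysis"
begin

definition is_dist :: "('a::finite \<Rightarrow> real) \<Rightarrow> bool" where
  "is_dist P \<longleftrightarrow> (\<forall>a. 0 \<le> P a) \<and> (\<Sum>a\<in>UNIV. P a) = 1"

definition abs_cont :: "('a \<Rightarrow> real) \<Rightarrow> ('a \<Rightarrow> real) \<Rightarrow> bool" where
  "abs_cont P Q \<longleftrightarrow> (\<forall>a. 0 < P a \<longrightarrow> 0 < Q a)"

definition kl_div :: "('a::finite \<Rightarrow> real) \<Rightarrow> ('a \<Rightarrow> real) \<Rightarrow> ereal" where
  "kl_div P Q = (if abs_cont P Q
     then ereal (\<Sum>a\<in>{a. 0 < P a}. P a * ln (P a / Q a))
     else \<infinity>)"

text \<open>Renyi divergence of order alpha. For alpha > 1 and P not << Q it is +infinity.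
  If the sum vanishes (only possible for alpha < 1), log 0 = -infinity and
  1/(alpha-1) < 0, so the value is +infinity.\<close>
definition renyi_div :: "real \<Rightarrow> ('a::finite \<Rightarrow> real) \<Rightarrow> ('a \<Rightarrow> real) \<Rightarrow> ereal" where
  "renyi_div \<alpha> P Q =
    (let s = (\<Sum>a\<in>{a. 0 < P a}. P a powr \<alpha> * Q a powr (1 - \<alpha>)) in
     if (1 < \<alpha> \<and> \<not> abs_cont P Q) \<or> s = 0 then \<infinity>
     else ereal (ln s / (\<alpha> - 1)))"

definition marg_X :: "('x::finite \<times> 'y::finite \<Rightarrow> real) \<Rightarrow> 'x \<Rightarrow> real" where
  "marg_X P x = (\<Sum>y\<in>UNIV. P (x, y))"

definition umlaut :: "('x::finite \<times> 'y::finite \<Rightarrow> real) \<Rightarrow> ereal" where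
  "umlaut P = (INF Q\<in>{Q::'y \<Rightarrow> real. is_dist Q}.
      kl_div (\<lambda>(x, y). marg_X P x * Q y) P)"

definition renyi_umlaut :: "real \<Rightarrow> ('x::finite \<times> 'y::finite \<Rightarrow> real) \<Rightarrow> ereal" where
  "renyi_umlaut \<alpha> P = (INF Q\<in>{Q::'y \<Rightarrow> real. is_dist Q}.
      renyi_div \<alpha> (\<lambda>(x, y). marg_X P x * Q y) P)"

end

theory Submission
  imports Defs
begin

lemma amgm:
  fixes a b t :: real
  assumes "0 < a" "0 < b" "0 \<le> t" "t \<le> 1"
  shows "a powr (1-t) * b powr t \<le> (1-t)*a + t*b"
proof -
  have "exp ((1 - t) *\<^sub>R ln a + t *\<^sub>R ln b) \<le> (1 - t) * exp (ln a) + t * exp (ln b)"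
    using convex_onD[OF exp_convex, of t "ln a" "ln b"] assms by simp
  moreover have "exp ((1 - t) *\<^sub>R ln a + t *\<^sub>R ln b) = a powr (1-t) * b powr t"
    using assms by (simp add: powr_def exp_add)
  ultimately show ?thesis using assms by simp
qed

lemma amgm0:
  fixes a b t :: real
  assumes "0 \<le> a" "0 \<le> b" "0 \<le> t" "t \<le> 1"
  shows "a powr (1-t) * b powr t \<le> (1-t)*a + t*b"
proof (cases "a = 0 \<or> b = 0")
  case True
  then show ?thesis using assms by auto
next
  case False
  then show ?thesis using amgm assms by auto
qed

lemma jensen_ln:
  fixes w t :: "'a \<Rightarrow> real"
  assumes "finite S" "\<And>a. a \<in> S \<Longrightarrow> 0 \<le> w a" "\<And>a. a \<in> S \<Longrightarrow> 0 < t a" "sum w S = 1"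
  shows "(\<Sum>a\<in>S. w a * ln (t a)) \<le> ln (\<Sum>a\<in>S. w a * t a)"
proof -
  define T where "T = (\<Sum>a\<in>S. w a * t a)"
  obtain a0 where a0: "a0 \<in> S" "w a0 > 0"
    using assms(4) assms(2) by (metis less_eq_real_def sum.neutral zero_neq_one)
  have "w a0 * t a0 \<le> T" unfolding T_def
    using assms a0 by (intro member_le_sum) (auto intro!: mult_nonneg_nonneg simp: less_imp_le)
  moreover have "w a0 * t a0 > 0" using a0 assms by auto
  ultimately have Tpos: "T > 0" by linarith
  have "(\<Sum>a\<in>S. w a * (ln (t a) - ln T)) \<le> (\<Sum>a\<in>S. w a * (t a / T - 1))"
  proof (rule sum_mono)
    fix a assume "a \<in> S"
    then have "ln (t a / T) \<le> t a / T - 1" using assms Tpos by (intro ln_le_minus_one) auto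
    then show "w a * (ln (t a) - ln T) \<le> w a * (t a / T - 1)"
      using assms(2,3)[of a] \<open>a\<in>S\<close> Tpos by (intro mult_left_mono) (auto simp: ln_div split: if_splits)
  qed
  also have "\<dots> = T / T - 1"
    using assms(4) by (simp add: algebra_simps sum_subtractf sum_divide_distrib[symmetric] T_def sum_distrib_left)
  also have "\<dots> = 0" using Tpos by simp
  finally have "(\<Sum>a\<in>S. w a * ln (t a)) - ln T * (\<Sum>a\<in>S. w a) \<le> 0"
    by (simp add: algebra_simps sum_subtractf sum_distrib_left sum_distrib_right)
  then show ?thesis using assms(4) T_def by simp
qed


definition Fg :: "real \<Rightarrow> ('a::finite \<Rightarrow> real) \<Rightarrow> ('a \<Rightarrow> real) \<Rightarrow> real" where
  "Fg g A B = (\<Sum>a\<in>UNIV. A a - A a powr (1-g) * B a powr g) / g"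

lemma sum_pos_part:
  fixes A :: "'a::finite \<Rightarrow> real"
  assumes "\<And>a. 0 \<le> A a" "\<And>a. A a = 0 \<Longrightarrow> f a = 0"
  shows "(\<Sum>a\<in>{a. 0 < A a}. f a) = (\<Sum>a\<in>UNIV. f a)"
  by (rule sum.mono_neutral_left) (use assms in \<open>auto simp: less_le\<close>)

lemma G3:
  fixes A B :: "'a::finite \<Rightarrow> real"
  assumes A0: "\<And>a. 0 \<le> A a" and B0: "\<And>a. 0 \<le> B a" and sA: "sum A UNIV = 1"
    and al: "0 < \<alpha>" "\<alpha> < 1"
  shows "ereal (Fg (1-\<alpha>) A B) \<le> renyi_div \<alpha> A B"
proof -
  define s where "s = (\<Sum>a\<in>{a. 0 < A a}. A a powr \<alpha> * B a powr (1 - \<alpha>))"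
  show ?thesis
  proof (cases "s = 0")
    case True then show ?thesis by (simp add: renyi_div_def s_def[symmetric])
  next
    case False
    have "s \<ge> 0" unfolding s_def by (intro sum_nonneg) auto
    with False have spos: "s > 0" by simp
    have r: "renyi_div \<alpha> A B = ereal (ln s / (\<alpha> - 1))"
      using False al by (simp add: renyi_div_def s_def[symmetric])
    have s2: "s = (\<Sum>a\<in>UNIV. A a powr \<alpha> * B a powr (1 - \<alpha>))"
      unfolding s_def by (rule sum_pos_part) (use A0 in auto)
    have "Fg (1-\<alpha>) A B = (1 - s) / (1 - \<alpha>)"
      unfolding Fg_def s2 by (simp add: sum_subtractf sA)
    also have "\<dots> \<le> ln s / (\<alpha> - 1)"
    proof -
      have "ln s \<le> s - 1" using spos by (rule ln_le_minus_one)
      then have "(1 - s) / (1 - \<alpha>) \<le> (- ln s) / (1 - \<alpha>)" using al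
        by (intro divide_right_mono) auto
      also have "(- ln s) / (1 - \<alpha>) = ln s / (\<alpha> - 1)"
        by (simp add: divide_simps) (simp add: algebra_simps)
      finally show ?thesis .
    qed
    finally show ?thesis using r by simp
  qed
qed

lemma G2:
  fixes A B :: "'a::finite \<Rightarrow> real"
  assumes A0: "\<And>a. 0 \<le> A a" and B0: "\<And>a. 0 \<le> B a" and sA: "sum A UNIV = 1"
    and al: "1 < \<alpha>"
  shows "kl_div A B \<le> renyi_div \<alpha> A B"
proof (cases "abs_cont A B")
  case False then show ?thesis using al by (simp add: renyi_div_def)
next
  case True
  define S where "S = {a. 0 < A a}"
  have Bp: "\<And>a. a \<in> S \<Longrightarrow> 0 < B a" using True unfolding S_def abs_cont_def by auto
  define s where "s = (\<Sum>a\<in>S. A a powr \<alpha> * B a powr (1 - \<alpha>))"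
  have sAS: "sum A S = 1" unfolding S_def using sA by (subst sum_pos_part) (use A0 in auto)
  have eq: "A a powr \<alpha> * B a powr (1 - \<alpha>) = A a * ((A a / B a) powr (\<alpha> - 1))" if "a \<in> S" for a
  proof -
    have "A a > 0" "B a > 0" using that Bp S_def by auto
    then show ?thesis
      by (simp add: powr_divide powr_diff powr_add field_simps)
  qed
  have J: "(\<Sum>a\<in>S. A a * ln ((A a / B a) powr (\<alpha> - 1))) \<le> ln (\<Sum>a\<in>S. A a * (A a / B a) powr (\<alpha> - 1))"
  proof (rule jensen_ln)
    fix a assume "a \<in> S"
    then show "0 < (A a / B a) powr (\<alpha> - 1)" using Bp[of a] S_def by auto
  qed (use A0 sAS S_def in auto)
  have "(\<Sum>a\<in>S. A a * ln ((A a / B a) powr (\<alpha> - 1))) = (\<alpha> - 1) * (\<Sum>a\<in>S. A a * ln (A a / B a))"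
    by (simp add: sum_distrib_left ln_powr algebra_simps)
  moreover have "(\<Sum>a\<in>S. A a * (A a / B a) powr (\<alpha> - 1)) = s"
    unfolding s_def by (rule sum.cong) (auto simp: eq)
  ultimately have "(\<alpha> - 1) * (\<Sum>a\<in>S. A a * ln (A a / B a)) \<le> ln s" using J by simp
  then have le: "(\<Sum>a\<in>S. A a * ln (A a / B a)) \<le> ln s / (\<alpha> - 1)" using al
    by (simp add: field_simps)
  show ?thesis
  proof (cases "s = 0")
    case True then show ?thesis unfolding renyi_div_def Let_def using True by (simp add: s_def S_def)
  next
    case False
    then have "renyi_div \<alpha> A B = ereal (ln s / (\<alpha> - 1))"
      using True by (simp add: renyi_div_def s_def S_def)
    moreover have "kl_div A B = ereal (\<Sum>a\<in>S. A a * ln (A a / B a))"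
      using True by (simp add: kl_div_def S_def)
    ultimately show ?thesis using le by simp
  qed
qed


lemma term_mono:
  fixes A B g g0 :: real
  assumes "0 \<le> A" "0 \<le> B" "0 < g" "g \<le> g0" "g0 \<le> 1"
  shows "(A - A powr (1-g0) * B powr g0) / g0 \<le> (A - A powr (1-g) * B powr g) / g"
proof -
  consider "A = 0" | "A > 0" "B = 0" | "A > 0" "B > 0" using assms by linarith
  then show ?thesis
  proof cases
    case 1 then show ?thesis by simp
  next
    case 2 then show ?thesis using assms by (simp add: frac_le)
  next
    case 3
    define x where "x = B / A"
    have xp: "x > 0" using 3 by (simp add: x_def)
    define y where "y = x powr g0"
    define t where "t = g / g0"
    have t: "0 \<le> t" "t \<le> 1" using assms by (auto simp: t_def)
    have yp: "y > 0" using xp by (simp add: y_def)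
    have "1 powr (1 - t) * y powr t \<le> (1-t)*1 + t*y" by (rule amgm) (use yp t in auto)
    moreover have "y powr t = x powr g" using assms by (simp add: y_def t_def powr_powr)
    ultimately have key: "x powr g - 1 \<le> t * (y - 1)" by (simp add: algebra_simps)
    have hB: "\<And>e. A powr (1-e) * B powr e = A * x powr e"
      using 3 by (simp add: x_def powr_divide powr_diff field_simps)
    have "A * g0 * (x powr g - 1) \<le> A * g0 * (t * (y - 1))"
      using key 3 assms by (intro mult_left_mono) auto
    also have "A * g0 * (t * (y - 1)) = A * g * (x powr g0 - 1)"
      using assms by (simp add: t_def y_def)
    finally have "A * g * (1 - x powr g0) \<le> A * g0 * (1 - x powr g)"
      by (simp add: algebra_simps)
    then show ?thesis using assms unfolding hB
      by (simp add: divide_simps algebra_simps)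
  qed
qed

lemma G4:
  fixes A B :: "'a::finite \<Rightarrow> real"
  assumes "\<And>a. 0 \<le> A a" "\<And>a. 0 \<le> B a" "0 < g" "g \<le> g0" "g0 \<le> 1"
  shows "Fg g0 A B \<le> Fg g A B"
  unfolding Fg_def sum_divide_distrib
  by (rule sum_mono) (rule term_mono, use assms in auto)

lemma term_lb:
  fixes A B g :: real
  assumes "0 \<le> A" "0 \<le> B" "0 < g" "g \<le> 1"
  shows "g * (A - B) \<le> A - A powr (1-g) * B powr g"
  using amgm0[OF assms(1,2), of g] assms by (simp add: algebra_simps)

lemma term_lim:
  fixes A B :: real
  assumes "0 \<le> A" "0 < A \<Longrightarrow> 0 < B"
  shows "((\<lambda>g. (A - A powr (1-g) * B powr g) / g) \<longlongrightarrow> (if 0 < A then A * ln (A / B) else 0)) (at_right 0)"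
proof (cases "A = 0")
  case True then show ?thesis by simp
next
  case False
  then have A: "A > 0" using assms by simp
  have Bp: "B > 0" using A assms(2) by linarith
  define h where "h = (\<lambda>g::real. A powr (1-g) * B powr g)"
  have "(h has_real_derivative (A * (ln B - ln A))) (at 0)"
    unfolding h_def using A Bp
    by (auto intro!: derivative_eq_intros simp: algebra_simps)
  then have "((\<lambda>y. (h y - h 0) / (y - 0)) \<longlongrightarrow> A * (ln B - ln A)) (at 0)"
    by (simp add: has_field_derivative_iff)
  then have "((\<lambda>y. - ((h y - h 0) / (y - 0))) \<longlongrightarrow> - (A * (ln B - ln A))) (at 0)"
    by (intro tendsto_minus)
  then have "((\<lambda>y. - ((h y - h 0) / (y - 0))) \<longlongrightarrow> - (A * (ln B - ln A))) (at_right 0)"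
    by (rule tendsto_mono[OF at_le, rotated]) simp
  moreover have "h 0 = A" using A Bp by (simp add: h_def)
  moreover have "(\<lambda>y. - ((h y - h 0) / (y - 0))) = (\<lambda>g. (A - A powr (1-g) * B powr g) / g)"
    using A Bp unfolding \<open>h 0 = A\<close> h_def by (simp add: minus_divide_left)
  moreover have "- (A * (ln B - ln A)) = (if 0 < A then A * ln (A / B) else 0)"
    using A Bp by (simp add: ln_div algebra_simps)
  ultimately show ?thesis by simp
qed

lemma G5:
  fixes A B :: "'a::finite \<Rightarrow> real"
  assumes A0: "\<And>a. 0 \<le> A a" and B0: "\<And>a. 0 \<le> B a" and sA: "sum A UNIV = 1" and sB: "sum B UNIV = 1"
    and c: "ereal c < kl_div A B"
  shows "\<exists>g. 0 < g \<and> g < 1 \<and> c < Fg g A B"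
proof (cases "abs_cont A B")
  case False
  then obtain a0 where a0: "A a0 > 0" "B a0 = 0" using B0 unfolding abs_cont_def
    by (metis less_eq_real_def)
  define g where "g = min (1/2) (A a0 / (2 * (\<bar>c\<bar> + 1)))"
  have "A a0 / (2 * (\<bar>c\<bar> + 1)) > 0" using a0 by (intro divide_pos_pos) auto
  then have g1: "0 < g" unfolding g_def by simp
  have g2: "g \<le> 1/2" unfolding g_def by (rule min.cobounded1)
  have g3: "g \<le> A a0 / (2 * (\<bar>c\<bar> + 1))" unfolding g_def by (rule min.cobounded2)
  note g = g1 g2 g3
  have tl: "\<And>a. g*(A a - B a) \<le> A a - A a powr (1-g)*B a powr g" using term_lb A0 B0 g by auto
  have "(\<Sum>a\<in>UNIV. A a - A a powr (1-g) * B a powr g)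
      = (\<Sum>a\<in>UNIV. (A a - A a powr (1-g) * B a powr g) - g * (A a - B a))"
    by (simp add: sum_subtractf sum_distrib_left[symmetric] sA sB)
  also have "\<dots> \<ge> (A a0 - A a0 powr (1-g) * B a0 powr g) - g * (A a0 - B a0)"
    using tl by (intro member_le_sum) (auto simp: diff_ge_0_iff_ge)
  finally have "(\<Sum>a\<in>UNIV. A a - A a powr (1-g) * B a powr g) \<ge> (1 - g) * A a0"
    using a0 g by (simp add: algebra_simps)
  then have "Fg g A B \<ge> (1 - g) * A a0 / g" unfolding Fg_def using g by (intro divide_right_mono) auto
  moreover have "(1 - g) * A a0 / g \<ge> A a0 / (2 * g)"
    using g a0 by (simp add: divide_simps)
  moreover have "A a0 / (2 * g) \<ge> \<bar>c\<bar> + 1"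
  proof -
    have "g * (2 * (\<bar>c\<bar> + 1)) \<le> A a0" using g3 by (subst (asm) pos_le_divide_eq) auto
    then show ?thesis using g1 by (subst pos_le_divide_eq) (auto simp: mult_ac)
  qed
  ultimately have "c < Fg g A B" by linarith
  then show ?thesis using g by auto
next
  case True
  define K where "K = (\<Sum>a\<in>{a. 0 < A a}. A a * ln (A a / B a))"
  have kl: "kl_div A B = ereal K" using True by (simp add: kl_div_def K_def)
  have K2: "K = (\<Sum>a\<in>UNIV. (if 0 < A a then A a * ln (A a / B a) else 0))"
    unfolding K_def by (subst sum_pos_part[symmetric, where A=A]) (use A0 in auto)
  have "((\<lambda>g. Fg g A B) \<longlongrightarrow> K) (at_right 0)"
    unfolding Fg_def sum_divide_distrib K2
    by (intro tendsto_sum term_lim) (use A0 True in \<open>auto simp: abs_cont_def\<close>)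
  moreover have "c < K" using c kl by simp
  ultimately have "eventually (\<lambda>g. c < Fg g A B) (at_right 0)"
    by (rule order_tendstoD)
  then obtain b where b: "b > 0" "\<And>y. y > 0 \<Longrightarrow> y < b \<Longrightarrow> c < Fg y A B"
    by (auto simp: eventually_at_right_field)
  show ?thesis using b(2)[of "min b 1 / 2"] b(1) by (intro exI[of _ "min b 1 / 2"]) auto
qed


lemma G1:
  fixes A B :: "'a::finite \<Rightarrow> real"
  assumes A0: "\<And>a. 0 \<le> A a" and B0: "\<And>a. 0 \<le> B a" and sA: "sum A UNIV = 1"
    and ac: "abs_cont A B"
  shows "((\<lambda>\<alpha>. renyi_div \<alpha> A B) \<longlongrightarrow> kl_div A B) (at 1)"
proof -
  define S where "S = {a. 0 < A a}"
  have Bp: "\<And>a. a \<in> S \<Longrightarrow> 0 < B a" using ac unfolding S_def abs_cont_def by auto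
  have Ap: "\<And>a. a \<in> S \<Longrightarrow> 0 < A a" unfolding S_def by auto
  have sAS: "sum A S = 1" unfolding S_def using sA by (subst sum_pos_part) (use A0 in auto)
  then have "S \<noteq> {}" by auto
  then obtain a0 where a0: "a0 \<in> S" by blast
  define g where "g = (\<lambda>\<alpha>. \<Sum>a\<in>S. B a * (A a / B a) powr \<alpha>)"
  have gpos: "g \<alpha> > 0" for \<alpha>
  proof -
    have "B a0 * (A a0 / B a0) powr \<alpha> \<le> g \<alpha>" unfolding g_def
      using Ap Bp a0 by (intro member_le_sum) (auto intro!: mult_nonneg_nonneg simp: less_imp_le)
    moreover have "B a0 * (A a0 / B a0) powr \<alpha> > 0" using Ap[OF a0] Bp[OF a0] by simp
    ultimately show ?thesis by linarith
  qed
  have g1: "g 1 = 1" unfolding g_def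
  proof -
    have "(\<Sum>a\<in>S. B a * (A a / B a) powr 1) = sum A S"
    proof (rule sum.cong)
      fix a assume "a \<in> S" then show "B a * (A a / B a) powr 1 = A a" using Ap[of a] Bp[of a] by simp
    qed simp
    then show "(\<Sum>a\<in>S. B a * (A a / B a) powr 1) = 1" using sAS by simp
  qed
  have seq: "(\<Sum>a\<in>{a. 0 < A a}. A a powr \<alpha> * B a powr (1 - \<alpha>)) = g \<alpha>" for \<alpha>
    unfolding g_def S_def[symmetric]
  proof (rule sum.cong)
    fix a assume "a \<in> S"
    then have "A a > 0" "B a > 0" using Ap Bp by auto
    then show "A a powr \<alpha> * B a powr (1 - \<alpha>) = B a * (A a / B a) powr \<alpha>"
      by (simp add: powr_divide powr_diff field_simps)
  qed simp
  have rd: "renyi_div \<alpha> A B = ereal (ln (g \<alpha>) / (\<alpha> - 1))" for \<alpha>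
    using gpos[of \<alpha>] ac by (simp add: renyi_div_def seq)
  define K where "K = (\<Sum>a\<in>S. A a * ln (A a / B a))"
  have kl: "kl_div A B = ereal K" using ac by (simp add: kl_div_def K_def S_def)
  have "(g has_real_derivative (\<Sum>a\<in>S. B a * ((A a / B a) powr 1 * ln (A a / B a)))) (at 1)"
    unfolding g_def using Ap Bp
    by (auto intro!: derivative_eq_intros sum.cong)
  moreover have "(\<Sum>a\<in>S. B a * ((A a / B a) powr 1 * ln (A a / B a))) = K"
    unfolding K_def
  proof (rule sum.cong)
    fix a assume "a \<in> S" then show "B a * ((A a / B a) powr 1 * ln (A a / B a)) = A a * ln (A a / B a)"
      using Ap[of a] Bp[of a] by simp
  qed simp
  ultimately have dg: "(g has_real_derivative K) (at 1)" by simp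
  have "((\<lambda>\<alpha>. ln (g \<alpha>)) has_real_derivative (1 / g 1 * K)) (at 1)"
    using dg gpos[of 1] by (auto intro!: derivative_eq_intros)
  then have "((\<lambda>\<alpha>. ln (g \<alpha>)) has_real_derivative K) (at 1)" using g1 by simp
  then have "((\<lambda>\<alpha>. (ln (g \<alpha>) - ln (g 1)) / (\<alpha> - 1)) \<longlongrightarrow> K) (at 1)"
    by (simp add: has_field_derivative_iff)
  then have "((\<lambda>\<alpha>. ereal ((ln (g \<alpha>)) / (\<alpha> - 1))) \<longlongrightarrow> ereal K) (at 1)"
    using g1 by (intro tendsto_ereal) simp
  then show ?thesis unfolding kl rd .
qed


lemma marg_props:
  fixes P :: "'x::finite \<times> 'y::finite \<Rightarrow> real"
  assumes "is_dist P"
  shows "\<And>x. 0 \<le> marg_X P x" "sum (marg_X P) UNIV = 1"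
proof -
  show "\<And>x. 0 \<le> marg_X P x" using assms unfolding is_dist_def marg_X_def by (auto intro: sum_nonneg)
  have "sum (marg_X P) UNIV = (\<Sum>x\<in>UNIV. \<Sum>y\<in>UNIV. P (x, y))" unfolding marg_X_def ..
  also have "\<dots> = sum P (UNIV \<times> UNIV)" by (subst sum.cartesian_product) simp
  also have "\<dots> = 1" using assms unfolding is_dist_def by (simp add: UNIV_Times_UNIV)
  finally show "sum (marg_X P) UNIV = 1" .
qed

lemma AQ_props:
  fixes P :: "'x::finite \<times> 'y::finite \<Rightarrow> real" and Q :: "'y \<Rightarrow> real"
  assumes "is_dist P" "\<And>y. 0 \<le> Q y" "sum Q UNIV = 1"
  shows "\<And>a. 0 \<le> (\<lambda>(x, y). marg_X P x * Q y) a" "sum (\<lambda>(x, y). marg_X P x * Q y) UNIV = 1"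
proof -
  note m = marg_props[OF assms(1)]
  show "\<And>a. 0 \<le> (\<lambda>(x, y). marg_X P x * Q y) a" using m assms by auto
  have "sum (\<lambda>(x, y). marg_X P x * Q y) UNIV = sum (\<lambda>(x, y). marg_X P x * Q y) (UNIV \<times> UNIV)"
    by (simp add: UNIV_Times_UNIV)
  also have "\<dots> = (\<Sum>x\<in>UNIV. \<Sum>y\<in>UNIV. marg_X P x * Q y)" by (subst sum.cartesian_product) simp
  also have "\<dots> = (\<Sum>x\<in>UNIV. marg_X P x)" by (simp add: sum_distrib_left[symmetric] assms(3))
  finally show "sum (\<lambda>(x, y). marg_X P x * Q y) UNIV = 1" using m by simp
qed

definition Dv :: "(real^'y) set" where
  "Dv = {v. (\<forall>i. 0 \<le> v$i) \<and> (\<Sum>i\<in>UNIV. v$i) = 1}"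

lemma Dv_compact: "compact (Dv :: (real^'y) set)"
proof -
  have "closed (Dv :: (real^'y) set)" unfolding Dv_def
    by (intro closed_Collect_conj closed_Collect_all closed_Collect_le closed_Collect_eq continuous_intros)
  moreover have "bounded (Dv :: (real^'y) set)" unfolding bounded_iff
  proof (intro exI ballI)
    fix v :: "real^'y" assume "v \<in> Dv"
    then have "norm v \<le> (\<Sum>i\<in>UNIV. \<bar>v$i\<bar>)" "(\<Sum>i\<in>UNIV. \<bar>v$i\<bar>) = 1"
      using norm_le_l1_cart[of v] by (auto simp: Dv_def)
    then show "norm v \<le> 1" by simp
  qed
  ultimately show ?thesis by (simp add: compact_eq_bounded_closed)
qed

lemma Dv_nonempty: "(Dv :: (real^'y) set) \<noteq> {}"
proof -
  obtain y0 :: 'y where True by simp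
  have "(\<chi> i. (if i = y0 then 1 else 0::real)) \<in> Dv" unfolding Dv_def by simp
  then show ?thesis by blast
qed

lemma Dv_iff: "v \<in> Dv \<longleftrightarrow> is_dist (\<lambda>i. v$i)"
  unfolding Dv_def is_dist_def by simp

lemma compactness:
  fixes P :: "'x::finite \<times> 'y::finite \<Rightarrow> real"
  assumes dP: "is_dist P" and c: "ereal c < umlaut P"
  shows "\<exists>g0. 0 < g0 \<and> g0 < 1 \<and> (\<forall>Q. is_dist Q \<longrightarrow> c < Fg g0 (\<lambda>(x, y). marg_X P x * Q y) P)"
proof (rule ccontr)
  assume H: "\<not> ?thesis"
  define \<Phi> where "\<Phi> = (\<lambda>g (v::real^'y). Fg g (\<lambda>(x, y). marg_X P x * v$y) P)"
  have P0: "\<And>a. 0 \<le> P a" and sP: "sum P UNIV = 1" using dP by (auto simp: is_dist_def)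
  note m = marg_props[OF dP]
  have Phi_eq: "\<Phi> g v = (\<Sum>a\<in>UNIV. marg_X P (fst a) * v$(snd a)
        - (marg_X P (fst a) * v$(snd a)) powr (1-g) * P a powr g) / g" for g v
    unfolding \<Phi>_def Fg_def by (simp add: case_prod_beta)
  have cont: "continuous_on Dv (\<Phi> g)" if "0 < g" "g < 1" for g
    unfolding Phi_eq[abs_def]
  proof (intro continuous_on_divide continuous_on_sum continuous_on_diff continuous_on_mult continuous_on_powr' continuous_on_const)
    show "continuous_on Dv (\<lambda>x. x $ snd a)" for a by (intro continuous_intros)
    show "continuous_on Dv (\<lambda>x. x $ snd a)" for a by (intro continuous_intros)
    show "\<forall>x\<in>Dv. 0 \<le> marg_X P (fst a) * x $ snd a \<and> (marg_X P (fst a) * x $ snd a = 0 \<longrightarrow> 0 < 1 - g)" for a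
      using that m by (auto simp: Dv_def)
  qed (use that P0 in auto)
  have nonempty: "\<exists>v\<in>Dv. \<Phi> g v \<le> c" if "0 < g" "g < 1" for g
  proof (rule ccontr)
    assume "\<not> ?thesis"
    then have "\<forall>Q. is_dist Q \<longrightarrow> c < Fg g (\<lambda>(x, y). marg_X P x * Q y) P"
      by (auto simp: Dv_iff \<Phi>_def not_le dest!: bspec[where x="\<chi> i. _ i"])
    then show False using H that by blast
  qed
  have "Dv \<inter> (\<Inter>g\<in>{0<..<1}. Dv \<inter> \<Phi> g -` {..c}) \<noteq> {}"
  proof (rule compact_imp_fip_image[OF Dv_compact])
    fix g :: real assume "g \<in> {0<..<1}"
    then show "closed (Dv \<inter> \<Phi> g -` {..c})"
      using cont by (intro continuous_closed_preimage compact_imp_closed[OF Dv_compact]) auto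
  next
    fix I' assume I': "finite I'" "I' \<subseteq> {0<..<1::real}"
    show "Dv \<inter> (\<Inter>g\<in>I'. Dv \<inter> \<Phi> g -` {..c}) \<noteq> {}"
    proof (cases "I' = {}")
      case True then show ?thesis using Dv_nonempty by simp
    next
      case False
      define gm where "gm = Min I'"
      have gm: "gm \<in> I'" "\<And>g. g \<in> I' \<Longrightarrow> gm \<le> g" using False I' by (auto simp: gm_def)
      have "gm \<in> {0<..<1}" using gm(1) I'(2) by blast
      then obtain v where v: "v \<in> Dv" "\<Phi> gm v \<le> c" using nonempty[of gm] by auto
      have "\<Phi> g v \<le> c" if "g \<in> I'" for g
      proof -
        have "\<Phi> g v \<le> \<Phi> gm v" unfolding \<Phi>_def
          by (rule G4) (use v(1) m gm that I' in \<open>auto simp: Dv_def P0\<close>)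
        then show ?thesis using v by simp
      qed
      then show ?thesis using v by blast
    qed
  qed
  then obtain v where v: "v \<in> Dv" "\<And>g. 0 < g \<Longrightarrow> g < 1 \<Longrightarrow> \<Phi> g v \<le> c"
  proof -
    from \<open>Dv \<inter> _ \<noteq> {}\<close> obtain v where "v \<in> Dv" "\<forall>g\<in>{0<..<1}. \<Phi> g v \<le> c" by blast
    then show ?thesis using that by auto
  qed
  define Q where "Q = (\<lambda>i. v$i)"
  have dQ: "is_dist Q" using v(1) unfolding Dv_iff Q_def .
  have "umlaut P \<le> kl_div (\<lambda>(x, y). marg_X P x * Q y) P"
    unfolding umlaut_def using dQ by (intro INF_lower) simp
  then have "ereal c < kl_div (\<lambda>(x, y). marg_X P x * Q y) P" using c by simp
  moreover have Q0: "\<And>y. 0 \<le> Q y" and sQ: "sum Q UNIV = 1" using dQ by (auto simp: is_dist_def)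
  note AQ = AQ_props[OF dP Q0 sQ]
  ultimately obtain g where g: "0 < g" "g < 1" "c < Fg g (\<lambda>(x, y). marg_X P x * Q y) P"
    using G5[OF AQ(1) P0 AQ(2) sP] by blast
  then show False using v(2)[of g] by (simp add: \<Phi>_def Q_def)
qed


theorem mainTheorem11:
  fixes P :: "'x::finite \<times> 'y::finite \<Rightarrow> real"
  assumes "is_dist P"
  shows "((\<lambda>\<alpha>. renyi_umlaut \<alpha> P) \<longlongrightarrow> umlaut P) (at_left 1) \<and>
         ((\<lambda>\<alpha>. renyi_umlaut \<alpha> P) \<longlongrightarrow> umlaut P) (at_right 1)"
proof -
  note dP = assms
  have P0: "\<And>a. 0 \<le> P a" and sP: "sum P UNIV = 1" using dP by (auto simp: is_dist_def)
  have AQ: "\<And>a. 0 \<le> (\<lambda>(x, y). marg_X P x * Q y) a" "sum (\<lambda>(x, y). marg_X P x * Q y) UNIV = 1"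
    if "is_dist Q" for Q :: "'y \<Rightarrow> real"
    using AQ_props[OF dP, of Q] that by (auto simp: is_dist_def)
  have up: "eventually (\<lambda>\<alpha>. renyi_umlaut \<alpha> P < a) (at 1)" if ua: "umlaut P < a" for a
  proof -
    obtain Q where Q: "is_dist Q" "kl_div (\<lambda>(x, y). marg_X P x * Q y) P < a"
    proof -
      have "\<exists>Q\<in>{Q. is_dist Q}. kl_div (\<lambda>(x, y). marg_X P x * Q y) P < a"
        using ua unfolding umlaut_def by (simp only: INF_less_iff)
      then show ?thesis using that by blast
    qed
    then have ac: "abs_cont (\<lambda>(x, y). marg_X P x * Q y) P"
      by (auto simp: kl_div_def split: if_splits)
    have "eventually (\<lambda>\<alpha>. renyi_div \<alpha> (\<lambda>(x, y). marg_X P x * Q y) P < a) (at 1)"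
      using order_tendstoD(2)[OF G1[where B=P, OF AQ(1)[OF Q(1)] P0 AQ(2)[OF Q(1)] ac] Q(2)] .
    then show ?thesis
    proof (rule eventually_mono)
      fix \<alpha> assume "renyi_div \<alpha> (\<lambda>(x, y). marg_X P x * Q y) P < a"
      moreover have "renyi_umlaut \<alpha> P \<le> renyi_div \<alpha> (\<lambda>(x, y). marg_X P x * Q y) P"
        unfolding renyi_umlaut_def using Q(1) by (intro INF_lower) simp
      ultimately show "renyi_umlaut \<alpha> P < a" by simp
    qed
  qed
  have right: "eventually (\<lambda>\<alpha>. a < renyi_umlaut \<alpha> P) (at_right 1)" if "a < umlaut P" for a
  proof -
    have "umlaut P \<le> renyi_umlaut \<alpha> P" if "1 < \<alpha>" for \<alpha>
      unfolding umlaut_def renyi_umlaut_def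
    proof (rule INF_mono)
      fix Q :: "'y \<Rightarrow> real" assume "Q \<in> {Q. is_dist Q}"
      then show "\<exists>Q'\<in>{Q. is_dist Q}. kl_div (\<lambda>(x, y). marg_X P x * Q' y) P
                  \<le> renyi_div \<alpha> (\<lambda>(x, y). marg_X P x * Q y) P"
      proof -
        have Q: "is_dist Q" using \<open>Q \<in> _\<close> by simp
        show ?thesis using G2[where B=P, OF AQ(1)[OF Q] P0 AQ(2)[OF Q] that] Q by blast
      qed
    qed
    then show ?thesis unfolding eventually_at_right_field using \<open>a < umlaut P\<close>
      by (intro exI[of _ 2]) (auto intro: less_le_trans)
  qed
  have left: "eventually (\<lambda>\<alpha>. a < renyi_umlaut \<alpha> P) (at_left 1)" if ua: "a < umlaut P" for a
  proof -
    obtain c where c: "a < ereal c" "ereal c < umlaut P" using ereal_dense2[OF ua] by blast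
    obtain g0 where g0: "0 < g0" "g0 < 1"
      and H: "\<And>Q. is_dist Q \<Longrightarrow> c < Fg g0 (\<lambda>(x, y). marg_X P x * Q y) P"
      using compactness[OF dP c(2)] by blast
    have "ereal c \<le> renyi_umlaut \<alpha> P" if "1 - g0 < \<alpha>" "\<alpha> < 1" for \<alpha>
      unfolding renyi_umlaut_def
    proof (rule INF_greatest)
      fix Q :: "'y \<Rightarrow> real" assume "Q \<in> {Q. is_dist Q}"
      then have Q: "is_dist Q" by simp
      have "ereal (Fg g0 (\<lambda>(x, y). marg_X P x * Q y) P) \<le> ereal (Fg (1-\<alpha>) (\<lambda>(x, y). marg_X P x * Q y) P)"
        using G4[where B=P, OF AQ(1)[OF Q] P0, of "1 - \<alpha>" g0] that g0 by simp
      also have "\<dots> \<le> renyi_div \<alpha> (\<lambda>(x, y). marg_X P x * Q y) P"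
        using G3[where B=P, OF AQ(1)[OF Q] P0 AQ(2)[OF Q], of \<alpha>] that g0 by simp
      finally show "ereal c \<le> renyi_div \<alpha> (\<lambda>(x, y). marg_X P x * Q y) P"
        using H[OF Q] by (meson ereal_less_eq(3) less_imp_le order_trans)
    qed
    then show ?thesis unfolding eventually_at_left_field using c(1) g0
      by (intro exI[of _ "1 - g0"]) (auto intro: less_le_trans)
  qed
  have "eventually (\<lambda>\<alpha>. renyi_umlaut \<alpha> P < a) (at_left 1) \<and> eventually (\<lambda>\<alpha>. renyi_umlaut \<alpha> P < a) (at_right 1)"
    if "umlaut P < a" for a using up[OF that] by (simp add: eventually_at_split)
  then show ?thesis using left right by (auto simp: order_tendsto_iff)
qed

end
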